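(* Consider $N$ follower agents with states $z_i(t)\in\mathbb{R}^n$, $i=1,\dots,N$, governed by $$\dot z_i(t)=\sum_{j=1}^{N}A^{\sigma(t)}_{ij}\big(h(z_j)-h(z_i)\big)+d^{\sigma(t)}_i\big(h(z_\gamma)-h(z_i)\big),$$ where $z_\gamma\in\mathbb{R}^n$ is a constant reference vector (the virtual leader), $h:\mathbb{R}^n\to\mathbb{R}^n$ is a polynomial map, and the switching data are as described in the context. Suppose that: (i) (Assumption 1) there exist a continuously differentiable, radially unbounded, positive definite polynomial $V:\mathbb{R}^n\to[0,\infty)$, a polynomial map $q:\mathbb{R}^n\to\mathbb{R}^p$ with $q(\alpha)=0\iff\alpha=0$, and a symmetric positive definite matrix $\Psi\in\mathbb{R}^{p\times p}$ such that for all $\alpha,\beta,\gamma\in\mathbb{R}^n$, $$\big(\nabla V(\alpha-\gamma)-\nabla V(\beta-\gamma)\big)^{\top}\big(h(\alpha)-h(\beta)\big)\ \ge\ \big(q(\alpha-\gamma)-q(\beta-\gamma)\big)^{\top}\Psi\big(q(\alpha-\gamma)-q(\beta-\gamma)\big);$$ (ii) for every $\kappa=0,1,2,\dots$, the switching graphs are jointly connected on $[t_\kappa,t_{\kappa+1})$, i.e. the undirected graph on nodes $\{0,1,\dots,N\}$ having edge $\{i,j\}$ ($i\ne j\ge1$) iff $A^{\sigma(t)}_{ij}>0$ for some $t\in[t_\kappa,t_{\kappa+1})$ and edge $\{0,i\}$ iff $d^{\sigma(t)}_i>0$ for some $t\in[t_\kappa,t_{\kappa+1})$, is connected. Then consensus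 is achieved: for every initial condition, $\lim_{t\to\infty}\|z_i(t)-z_\gamma\|=0$ for all $i=1,\dots,N$ (equivalently, for every $\epsilon>0$ there is $T>0$ with $\|z_i(t)-z_\gamma\|\le\epsilon$ for all $t\ge T$ and all $i$).
   Context: Switching data: there are finitely many modes $\mathcal{M}=\{1,\dots,m\}$; for each $k\in\mathcal{M}$, $A^{k}=(A^k_{ij})\in\mathbb{R}^{N\times N}$ is symmetric with nonnegative entries and zero diagonal (weighted adjacency matrix of an undirected graph among followers), and $d^k_i\ge0$ ($d^k_i>0$ iff follower $i$ receives the leader's information in mode $k$). The switching signal $\sigma:[0,\infty)\to\mathcal{M}$ is piecewise constant. There is a sequence $0=t_0<t_1<t_2<\cdots$ with $\sup_\kappa(t_{\kappa+1}-t_\kappa)<\infty$, and each $[t_\kappa,t_{\kappa+1})$ is partitioned into finitely many contiguous subintervals $[t_\kappa^{l},t_\kappa^{l+1})$, $l=0,\dots,s_\kappa-1$, with $t_\kappa^0=t_\kappa$, $t_\kappa^{s_\kappa}=t_{\kappa+1}$, such that $\sigma$ is constant on each subinterval and there is a dwell time $\tau>0$ with $t_\kappa^{l+1}-t_\kappa^{l}\ge\tau$ for all $\kappa,l$. Individual graphs need not be connected. $\nabla V(x)$ denotes the gradient of $V$ at $x$. $V$ positive definite means $V(0)=0$ and $V(x)>0$ for $x\neq0$; radially unbounded means $V(x)\to\infty$ as $\|x\|\to\infty$. *)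

theory Defs
  imports "HOL-Analysis.Analysis"
begin

inductive poly_fun :: "(real^'n \<Rightarrow> real) \<Rightarrow> bool" where
  pf_const: "poly_fun (\<lambda>x. c)"
| pf_coord: "poly_fun (\<lambda>x. x $ i)"
| pf_add: "poly_fun f \<Longrightarrow> poly_fun g \<Longrightarrow> poly_fun (\<lambda>x. f x + g x)"
| pf_mult: "poly_fun f \<Longrightarrow> poly_fun g \<Longrightarrow> poly_fun (\<lambda>x. f x * g x)"

definition poly_map :: "(real^'n \<Rightarrow> real^'p) \<Rightarrow> bool" where
  "poly_map f \<longleftrightarrow> (\<forall>k. poly_fun (\<lambda>x. f x $ k))"

definition admissible_switching :: "(real \<Rightarrow> 'm) \<Rightarrow> (nat \<Rightarrow> real) \<Rightarrow> bool" where
  "admissible_switching \<sigma> t \<longleftrightarrow>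
     t 0 = 0 \<and> (\<forall>k. t k < t (Suc k)) \<and> (\<exists>B. \<forall>k. t (Suc k) - t k \<le> B) \<and>
     (\<exists>\<tau>>0. \<forall>k. \<exists>(s::nat) (tt::nat \<Rightarrow> real).
        tt 0 = t k \<and> tt s = t (Suc k) \<and>
        (\<forall>l<s. tt (Suc l) - tt l \<ge> \<tau> \<and>
               (\<forall>r\<in>{tt l..<tt (Suc l)}. \<sigma> r = \<sigma> (tt l))))"

text \<open>Union graph on [t k, t (k+1)): nodes None (the leader, node 0) and Some i (followers).\<close>
definition union_edge ::
  "('m \<Rightarrow> 'f \<Rightarrow> 'f \<Rightarrow> real) \<Rightarrow> ('m \<Rightarrow> 'f \<Rightarrow> real) \<Rightarrow> (real \<Rightarrow> 'm) \<Rightarrow> real \<Rightarrow> real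
     \<Rightarrow> 'f option \<Rightarrow> 'f option \<Rightarrow> bool" where
  "union_edge A d \<sigma> a b u v \<longleftrightarrow>
     (case (u, v) of
        (Some i, Some j) \<Rightarrow> i \<noteq> j \<and> (\<exists>r\<in>{a..<b}. A (\<sigma> r) i j > 0)
      | (None, Some i) \<Rightarrow> (\<exists>r\<in>{a..<b}. d (\<sigma> r) i > 0)
      | (Some i, None) \<Rightarrow> (\<exists>r\<in>{a..<b}. d (\<sigma> r) i > 0)
      | (None, None) \<Rightarrow> False)"

definition jointly_connected ::
  "('m \<Rightarrow> 'f \<Rightarrow> 'f \<Rightarrow> real) \<Rightarrow> ('m \<Rightarrow> 'f \<Rightarrow> real) \<Rightarrow> (real \<Rightarrow> 'm) \<Rightarrow> real \<Rightarrow> real \<Rightarrow> bool" where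
  "jointly_connected A d \<sigma> a b \<longleftrightarrow> (\<forall>u v. (union_edge A d \<sigma> a b)\<^sup>*\<^sup>* u v)"

end

theory Submission
  imports Defs "HOL-Analysis.Analysis"
begin

lemma rderiv_mono_aux:
  fixes g :: "real \<Rightarrow> real"
  assumes ab: "a \<le> b" and gc: "continuous_on {a..b} g"
    and gd: "\<And>x. x \<in> {a..<b} \<Longrightarrow> (g has_real_derivative g' x) (at x within {x..})"
    and gn: "\<And>x. x \<in> {a..<b} \<Longrightarrow> g' x \<le> 0"
    and e: "e > 0"
  shows "g b \<le> g a + e * (b - a)"
proof (rule ccontr)
  assume nb: "\<not> ?thesis"
  define \<phi> where "\<phi> x = g x - g a - e * (x - a)" for x
  define S where "S = {x\<in>{a..b}. \<phi> x \<le> 0}"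
  have cphi: "continuous_on {a..b} \<phi>" unfolding \<phi>_def by (intro continuous_intros gc)
  have "S = {a..b} \<inter> \<phi> -` {..0}" unfolding S_def by auto
  hence "closed S" using continuous_closed_preimage[OF cphi] by simp
  have aS: "a \<in> S" using ab by (simp add: S_def \<phi>_def)
  have bdd: "bdd_above S" unfolding S_def by (rule bdd_aboveI[of _ b]) auto
  define c where "c = Sup S"
  have cS: "c \<in> S" unfolding c_def using closed_contains_Sup[OF _ bdd \<open>closed S\<close>] aS by blast
  have cb: "c < b"
  proof -
    have "c \<le> b" using cS by (simp add: S_def)
    moreover have "c \<noteq> b" using cS nb by (auto simp: S_def \<phi>_def algebra_simps)
    ultimately show ?thesis by simp
  qed
  have ca: "a \<le> c" using cS by (simp add: S_def)
  have above: "\<phi> x > 0" if "c < x" "x \<le> b" for x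
  proof (rule ccontr)
    assume "\<not> \<phi> x > 0"
    hence "x \<in> S" using that ca by (simp add: S_def)
    hence "x \<le> c" unfolding c_def using bdd by (rule cSup_upper)
    thus False using that by simp
  qed
  have "(\<phi> has_real_derivative (g' c - e)) (at c within {c..})"
    unfolding \<phi>_def using gd[of c] ca cb by (auto intro!: derivative_eq_intros)
  moreover have "g' c - e < 0" using gn[of c] ca cb e by simp
  ultimately obtain d where d: "d > 0" "\<And>h. h > 0 \<Longrightarrow> c + h \<in> {c..} \<Longrightarrow> h < d \<Longrightarrow> \<phi> (c + h) < \<phi> c"
    using has_real_derivative_neg_dec_right by blast
  define h where "h = min (d/2) (b - c)"
  have h: "h > 0" "h < d" "c + h \<le> b" using d cb by (auto simp: h_def)
  have "\<phi> (c + h) < \<phi> c" using d(2)[of h] h by simp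
  moreover have "\<phi> c \<le> 0" using cS by (simp add: S_def)
  moreover have "\<phi> (c + h) > 0" using above[of "c + h"] h by simp
  ultimately show False by simp
qed

lemma rderiv_mono:
  fixes g :: "real \<Rightarrow> real"
  assumes ab: "a \<le> b" and gc: "continuous_on {a..b} g"
    and gd: "\<And>x. x \<in> {a..<b} \<Longrightarrow> (g has_real_derivative g' x) (at x within {x..})"
    and gn: "\<And>x. x \<in> {a..<b} \<Longrightarrow> g' x \<le> 0"
  shows "g b \<le> g a"
proof (rule field_le_epsilon)
  fix e :: real assume "e > 0"
  show "g b \<le> g a + e"
  proof (cases "a = b")
    case True thus ?thesis using \<open>e>0\<close> by simp
  next
    case False
    hence "b - a > 0" using ab by simp
    have "g b \<le> g a + (e / (b - a)) * (b - a)"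
      by (rule rderiv_mono_aux[OF ab gc gd gn]) (use \<open>e>0\<close> \<open>b-a>0\<close> in auto)
    thus ?thesis using \<open>b-a>0\<close> by simp
  qed
qed


lemma rderiv_lip:
  fixes f :: "real \<Rightarrow> 'a::real_inner"
  assumes ab: "a \<le> b" and fc: "continuous_on {a..b} f"
    and fd: "\<And>x. x \<in> {a..<b} \<Longrightarrow> (f has_vector_derivative f' x) (at x within {x..})"
    and fb: "\<And>x. x \<in> {a..<b} \<Longrightarrow> norm (f' x) \<le> M"
  shows "norm (f b - f a) \<le> M * (b - a)"
proof -
  define u where "u = f b - f a"
  define g where "g x = inner u (f x) - M * norm u * x" for x
  have "g b \<le> g a"
  proof (rule rderiv_mono[OF ab, of g "\<lambda>x. inner u (f' x) - M * norm u"])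
    show "continuous_on {a..b} g" unfolding g_def by (intro continuous_intros fc)
  next
    fix x assume x: "x \<in> {a..<b}"
    have "((\<lambda>x. inner u (f x)) has_real_derivative inner u (f' x)) (at x within {x..})"
      using fd[OF x] unfolding has_vector_derivative_def has_field_derivative_def
      by (auto intro!: derivative_eq_intros simp: inner_scaleR_right)
    thus "(g has_real_derivative inner u (f' x) - M * norm u) (at x within {x..})"
      unfolding g_def by (auto intro!: derivative_eq_intros)
    have "inner u (f' x) \<le> norm u * norm (f' x)" by (rule norm_cauchy_schwarz)
    also have "\<dots> \<le> norm u * M" using fb[OF x] by (simp add: mult_left_mono)
    finally show "inner u (f' x) - M * norm u \<le> 0" by (simp add: algebra_simps)
  qed
  hence "inner u u \<le> M * norm u * (b - a)" unfolding g_def u_def by (simp add: algebra_simps inner_diff_right)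
  hence "norm u * norm u \<le> norm u * (M * (b - a))" by (simp add: power2_norm_eq_inner[symmetric] power2_eq_square algebra_simps)
  moreover have "0 \<le> M * (b - a)"
  proof (cases "a = b")
    case False
    hence "M \<ge> 0" using fb[of a] ab by (meson atLeastLessThan_iff norm_ge_zero order.trans order_refl order_less_le)
    thus ?thesis using ab by simp
  qed simp
  ultimately show ?thesis unfolding u_def[symmetric]
    by (cases "norm u = 0") (auto simp: mult_le_cancel_left)
qed

lemma poly_fun_cont: "poly_fun f \<Longrightarrow> continuous_on UNIV f"
  by (induction rule: poly_fun.induct) (auto intro!: continuous_intros)

lemma poly_map_cont:
  assumes "poly_map f" shows "continuous_on UNIV f"
proof -
  have "continuous_on UNIV (\<lambda>x. \<chi> k. f x $ k)"
    using assms unfolding poly_map_def by (intro continuous_intros poly_fun_cont) auto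
  thus ?thesis by simp
qed

lemma compact_pos_min:
  fixes \<phi> :: "'a::metric_space \<Rightarrow> real"
  assumes "compact K" "continuous_on K \<phi>" "\<And>x. x \<in> K \<Longrightarrow> \<phi> x > 0"
  shows "\<exists>\<mu>>0. \<forall>x\<in>K. \<phi> x \<ge> \<mu>"
proof (cases "K = {}")
  case True thus ?thesis by (auto intro: exI[of _ 1])
next
  case False
  then obtain x0 where "x0 \<in> K" "\<forall>x\<in>K. \<phi> x0 \<le> \<phi> x"
    using continuous_attains_inf[OF assms(1) False assms(2)] by blast
  thus ?thesis using assms(3) by blast
qed


locale sys =
  fixes A :: "'m::finite \<Rightarrow> 'f::finite \<Rightarrow> 'f \<Rightarrow> real"
    and d :: "'m \<Rightarrow> 'f \<Rightarrow> real"
    and \<sigma> :: "real \<Rightarrow> 'm"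
    and t :: "nat \<Rightarrow> real"
    and h :: "real^'n \<Rightarrow> real^'n"
    and z\<^sub>\<gamma> :: "real^'n"
    and V :: "real^'n \<Rightarrow> real"
    and gradV :: "real^'n \<Rightarrow> real^'n"
    and q :: "real^'n \<Rightarrow> real^'p"
    and \<Psi> :: "real^'p^'p"
    and z :: "real \<Rightarrow> 'f \<Rightarrow> real^'n"
  assumes A_sym: "\<And>k i j. A k i j = A k j i"
    and A_nonneg: "\<And>k i j. A k i j \<ge> 0"
    and A_diag: "\<And>k i. A k i i = 0"
    and d_nonneg: "\<And>k i. d k i \<ge> 0"
    and switching: "admissible_switching \<sigma> t"
    and h_poly: "poly_map h"
    and V_nonneg: "\<And>x. V x \<ge> 0"
    and V_zero: "V 0 = 0"
    and V_pos: "\<And>x. x \<noteq> 0 \<Longrightarrow> V x > 0"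
    and V_radial: "\<And>M. \<exists>R. \<forall>x. norm x \<ge> R \<longrightarrow> V x \<ge> M"
    and V_grad: "\<And>x. GDERIV V x :> gradV x"
    and q_poly: "poly_map q"
    and q_zero: "\<And>\<alpha>. q \<alpha> = 0 \<longleftrightarrow> \<alpha> = 0"
    and Psi_pd: "\<And>x. x \<noteq> 0 \<Longrightarrow> x \<bullet> (\<Psi> *v x) > 0"
    and assumption1: "\<And>\<alpha> \<beta> \<gamma>.
          (gradV (\<alpha> - \<gamma>) - gradV (\<beta> - \<gamma>)) \<bullet> (h \<alpha> - h \<beta>)
          \<ge> (q (\<alpha> - \<gamma>) - q (\<beta> - \<gamma>)) \<bullet> (\<Psi> *v (q (\<alpha> - \<gamma>) - q (\<beta> - \<gamma>)))"
    and joint_conn: "\<And>k. jointly_connected A d \<sigma> (t k) (t (Suc k))"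
    and z_cont: "\<And>i. continuous_on {0..} (\<lambda>s. z s i)"
    and z_ode: "\<And>i s. s \<ge> 0 \<Longrightarrow>
          ((\<lambda>r. z r i) has_vector_derivative
             ((\<Sum>j\<in>UNIV. A (\<sigma> s) i j *\<^sub>R (h (z s j) - h (z s i)))
              + d (\<sigma> s) i *\<^sub>R (h z\<^sub>\<gamma> - h (z s i)))) (at s within {s..})"
begin

definition "e s i = z s i - z\<^sub>\<gamma>"
definition "F s i = (\<Sum>j\<in>UNIV. A (\<sigma> s) i j *\<^sub>R (h (z s j) - h (z s i)))
              + d (\<sigma> s) i *\<^sub>R (h z\<^sub>\<gamma> - h (z s i))"
definition "Qf y = y \<bullet> (\<Psi> *v y)"
definition "T s i j = (gradV (e s i) - gradV (e s j)) \<bullet> (h (z s i) - h (z s j))"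
definition "T0 s i = gradV (e s i) \<bullet> (h (z s i) - h z\<^sub>\<gamma>)"
definition "U C s = (\<Sum>i\<in>C. V (e s i))"
definition "W s = U UNIV s"
definition "Dis C s = (1/2) * (\<Sum>i\<in>C. \<Sum>j\<in>C. A (\<sigma> s) i j * T s i j) + (\<Sum>i\<in>C. d (\<sigma> s) i * T0 s i)"
definition "closed_set m C \<longleftrightarrow> (\<forall>i\<in>C. \<forall>j. A m i j \<noteq> 0 \<longrightarrow> j \<in> C)"

lemma V_deriv: "(V has_derivative (\<lambda>v. v \<bullet> gradV x)) (at x)"
  using V_grad[of x] unfolding gderiv_def .

lemma V_cont: "continuous_on UNIV V"
  using V_deriv has_derivative_continuous continuous_at_imp_continuous_on by blast

lemma gradV0: "gradV 0 = 0"
proof -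
  have "(\<lambda>v. v \<bullet> gradV 0) = (\<lambda>v. 0)"
    by (rule has_derivative_local_min[OF V_deriv]) (auto simp: V_zero V_nonneg)
  hence "gradV 0 \<bullet> gradV 0 = 0" by meson
  thus ?thesis by simp
qed

lemma q0: "q 0 = 0" using q_zero by simp

lemma Qf_nonneg: "Qf y \<ge> 0"
  using Psi_pd[of y] by (cases "y = 0") (auto simp: Qf_def)

lemma T_ge: "T s i j \<ge> Qf (q (e s i) - q (e s j))"
  using assumption1[of "z s i" z\<^sub>\<gamma> "z s j"] by (simp add: T_def Qf_def e_def)

lemma T0_ge: "T0 s i \<ge> Qf (q (e s i))"
  using assumption1[of "z s i" z\<^sub>\<gamma> "z\<^sub>\<gamma>"] by (simp add: T0_def Qf_def e_def gradV0 q0)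

lemma T_nonneg: "T s i j \<ge> 0" using T_ge Qf_nonneg order_trans by blast
lemma T0_nonneg: "T0 s i \<ge> 0" using T0_ge Qf_nonneg order_trans by blast

lemma Dis_nonneg: "Dis C s \<ge> 0"
  unfolding Dis_def
  by (intro add_nonneg_nonneg mult_nonneg_nonneg sum_nonneg)
     (auto intro!: mult_nonneg_nonneg A_nonneg d_nonneg T_nonneg T0_nonneg)

lemma T_sym: "T s i j = T s j i"
  unfolding T_def by (simp add: inner_diff_left inner_diff_right algebra_simps)

lemma edge_le_Dis: "A (\<sigma> s) i j * T s i j \<le> 2 * Dis UNIV s"
proof -
  have "A (\<sigma> s) i j * T s i j \<le> (\<Sum>j\<in>UNIV. A (\<sigma> s) i j * T s i j)"
    by (rule member_le_sum) (auto intro!: mult_nonneg_nonneg A_nonneg T_nonneg)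
  also have "\<dots> \<le> (\<Sum>i\<in>UNIV. \<Sum>j\<in>UNIV. A (\<sigma> s) i j * T s i j)"
    by (rule member_le_sum[where f="\<lambda>i. \<Sum>j\<in>UNIV. A (\<sigma> s) i j * T s i j"])
      (auto intro!: sum_nonneg mult_nonneg_nonneg A_nonneg T_nonneg)
  also have "\<dots> \<le> 2 * Dis UNIV s"
    unfolding Dis_def
    using sum_nonneg[of UNIV "\<lambda>i. d (\<sigma> s) i * T0 s i"] d_nonneg T0_nonneg
    by (auto simp: algebra_simps)
  finally show ?thesis .
qed

lemma leader_le_Dis: "d (\<sigma> s) i * T0 s i \<le> Dis UNIV s"
proof -
  have "d (\<sigma> s) i * T0 s i \<le> (\<Sum>i\<in>UNIV. d (\<sigma> s) i * T0 s i)"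
    by (rule member_le_sum) (auto intro!: mult_nonneg_nonneg d_nonneg T0_nonneg)
  moreover have "0 \<le> (\<Sum>i\<in>UNIV. \<Sum>j\<in>UNIV. A (\<sigma> s) i j * T s i j)"
    by (auto intro!: sum_nonneg mult_nonneg_nonneg A_nonneg T_nonneg)
  ultimately show ?thesis unfolding Dis_def by simp
qed

lemma deriv_V:
  assumes "s \<ge> 0"
  shows "((\<lambda>r. V (e r i)) has_real_derivative (gradV (e s i) \<bullet> F s i)) (at s within {s..})"
proof -
  have "((\<lambda>r. z r i) has_derivative (\<lambda>x. x *\<^sub>R F s i)) (at s within {s..})"
    using z_ode[OF assms, of i] unfolding has_vector_derivative_def F_def .
  hence "((\<lambda>r. e r i) has_derivative (\<lambda>x. x *\<^sub>R F s i)) (at s within {s..})"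
    unfolding e_def by (auto intro!: derivative_eq_intros)
  from has_derivative_compose[OF this V_deriv]
  have "((\<lambda>r. V (e r i)) has_derivative (\<lambda>x. (x *\<^sub>R F s i) \<bullet> gradV (e s i))) (at s within {s..})" .
  thus ?thesis
    by (rule has_derivative_imp_has_field_derivative) (simp add: inner_commute)
qed

lemma sum_grad_F:
  assumes cl: "closed_set (\<sigma> s) C"
  shows "(\<Sum>i\<in>C. gradV (e s i) \<bullet> F s i) = - Dis C s"
proof -
  define a where "a i j = A (\<sigma> s) i j" for i j
  define g where "g i = gradV (e s i)" for i
  define y where "y i = h (z s i)" for i
  have as: "a i j = a j i" for i j unfolding a_def by (rule A_sym)
  have gF: "g i \<bullet> F s i = (\<Sum>j\<in>UNIV. a i j * (g i \<bullet> (y j - y i))) - d (\<sigma> s) i * T0 s i" for i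
    unfolding F_def T0_def a_def g_def y_def
    by (simp add: inner_sum_right inner_add_right inner_diff_right algebra_simps)
  have restr: "(\<Sum>j\<in>UNIV. a i j * (g i \<bullet> (y j - y i))) = (\<Sum>j\<in>C. a i j * (g i \<bullet> (y j - y i)))"
    if "i \<in> C" for i
    by (rule sum.mono_neutral_right) (use cl that in \<open>auto simp: closed_set_def a_def\<close>)
  define X where "X = (\<Sum>i\<in>C. \<Sum>j\<in>C. a i j * (g i \<bullet> (y j - y i)))"
  have "X = (\<Sum>j\<in>C. \<Sum>i\<in>C. a i j * (g i \<bullet> (y j - y i)))" unfolding X_def by (rule sum.swap)
  also have "\<dots> = (\<Sum>i\<in>C. \<Sum>j\<in>C. a i j * (g j \<bullet> (y i - y j)))" using as by simp
  finally have X2: "X = (\<Sum>i\<in>C. \<Sum>j\<in>C. a i j * (g j \<bullet> (y i - y j)))" .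
  have "X + X = (\<Sum>i\<in>C. \<Sum>j\<in>C. a i j * (g i \<bullet> (y j - y i)) + a i j * (g j \<bullet> (y i - y j)))"
    by (subst X2) (simp add: X_def sum.distrib)
  also have "\<dots> = - (\<Sum>i\<in>C. \<Sum>j\<in>C. a i j * T s i j)"
    unfolding T_def a_def g_def y_def
    by (simp add: sum_negf[symmetric] inner_diff_left inner_diff_right algebra_simps)
  finally have Xv: "X = - (1/2) * (\<Sum>i\<in>C. \<Sum>j\<in>C. a i j * T s i j)" by simp
  have "(\<Sum>i\<in>C. gradV (e s i) \<bullet> F s i) = X - (\<Sum>i\<in>C. d (\<sigma> s) i * T0 s i)"
    unfolding X_def g_def[symmetric] using gF restr by (simp add: sum_subtractf)
  thus ?thesis using Xv unfolding Dis_def a_def by simp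
qed

lemma deriv_U:
  assumes "s \<ge> 0" "closed_set (\<sigma> s) C"
  shows "(U C has_real_derivative - Dis C s) (at s within {s..})"
proof -
  have "((\<lambda>r. \<Sum>i\<in>C. V (e r i)) has_real_derivative (\<Sum>i\<in>C. gradV (e s i) \<bullet> F s i)) (at s within {s..})"
    by (rule DERIV_sum) (rule deriv_V[OF assms(1)])
  thus ?thesis unfolding U_def[abs_def] sum_grad_F[OF assms(2)] .
qed

lemma U_cont: "continuous_on {0..} (U C)"
  unfolding U_def[abs_def] e_def
  by (intro continuous_intros continuous_on_compose2[OF V_cont] z_cont) auto

lemma U_drop:
  assumes "0 \<le> a" "a \<le> b" "\<And>r. r \<in> {a..<b} \<Longrightarrow> closed_set (\<sigma> r) C"
    "\<And>r. r \<in> {a..<b} \<Longrightarrow> Dis C r \<ge> c"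
  shows "U C b + c * (b - a) \<le> U C a"
proof -
  have "(\<lambda>s. U C s + c * s) b \<le> (\<lambda>s. U C s + c * s) a"
  proof (rule rderiv_mono[OF assms(2), of _ "\<lambda>r. - Dis C r + c"])
    show "continuous_on {a..b} (\<lambda>s. U C s + c * s)"
      by (intro continuous_intros continuous_on_subset[OF U_cont]) (use assms in auto)
  next
    fix x assume x: "x \<in> {a..<b}"
    show "((\<lambda>s. U C s + c * s) has_real_derivative - Dis C x + c) (at x within {x..})"
      using deriv_U[of x C] assms x by (auto intro!: derivative_eq_intros)
    show "- Dis C x + c \<le> 0" using assms(4)[OF x] by simp
  qed
  thus ?thesis by (simp add: algebra_simps)
qed

lemma closed_UNIV: "closed_set m UNIV" by (simp add: closed_set_def)

lemma U_mono:
  assumes "0 \<le> a" "a \<le> b" "\<And>r. r \<in> {a..<b} \<Longrightarrow> closed_set (\<sigma> r) C"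
  shows "U C b \<le> U C a"
  using U_drop[OF assms, of 0] Dis_nonneg by simp

lemma W_mono: "0 \<le> a \<Longrightarrow> a \<le> b \<Longrightarrow> W b \<le> W a"
  unfolding W_def by (rule U_mono) (auto simp: closed_UNIV)

lemma W_drop:
  assumes "0 \<le> a" "a \<le> b" "\<And>r. r \<in> {a..<b} \<Longrightarrow> Dis UNIV r \<ge> c"
  shows "W b + c * (b - a) \<le> W a"
  unfolding W_def by (rule U_drop) (use assms closed_UNIV in auto)

lemma V_le_U: "finite C \<Longrightarrow> i \<in> C \<Longrightarrow> V (e s i) \<le> U C s"
  unfolding U_def by (rule member_le_sum) (auto simp: V_nonneg)

lemma W_nonneg: "W s \<ge> 0" unfolding W_def U_def by (simp add: sum_nonneg V_nonneg)

end


context sys begin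

lemma bound_e: "\<exists>R0. \<forall>s\<ge>0. \<forall>i. norm (e s i) \<le> R0"
proof -
  obtain R where R: "\<And>x. norm x \<ge> R \<Longrightarrow> V x \<ge> W 0 + 1" using V_radial[of "W 0 + 1"] by blast
  have "norm (e s i) \<le> R" if "s \<ge> 0" for s i
  proof (rule ccontr)
    assume "\<not> ?thesis"
    hence "V (e s i) \<ge> W 0 + 1" using R by simp
    moreover have "V (e s i) \<le> W s" unfolding W_def by (rule V_le_U) auto
    moreover have "W s \<le> W 0" using W_mono that by simp
    ultimately show False by simp
  qed
  thus ?thesis by blast
qed

definition "SA = (\<Sum>m\<in>UNIV. \<Sum>i\<in>UNIV. \<Sum>j\<in>UNIV. A m i j) + (\<Sum>m\<in>UNIV. \<Sum>i\<in>UNIV. d m i)"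

lemma row_le: "(\<Sum>j\<in>UNIV. A m i j) + d m i \<le> SA"
proof -
  have "(\<Sum>j\<in>UNIV. A m i j) \<le> (\<Sum>i\<in>UNIV. \<Sum>j\<in>UNIV. A m i j)"
    by (rule member_le_sum[where f="\<lambda>i. \<Sum>j\<in>UNIV. A m i j"]) (auto intro!: sum_nonneg A_nonneg)
  also have "\<dots> \<le> (\<Sum>m\<in>UNIV. \<Sum>i\<in>UNIV. \<Sum>j\<in>UNIV. A m i j)"
    by (rule member_le_sum[where f="\<lambda>m. \<Sum>i\<in>UNIV. \<Sum>j\<in>UNIV. A m i j"]) (auto intro!: sum_nonneg A_nonneg)
  finally have 1: "(\<Sum>j\<in>UNIV. A m i j) \<le> (\<Sum>m\<in>UNIV. \<Sum>i\<in>UNIV. \<Sum>j\<in>UNIV. A m i j)" .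
  have "d m i \<le> (\<Sum>i\<in>UNIV. d m i)"
    by (rule member_le_sum) (auto intro!: d_nonneg)
  also have "\<dots> \<le> (\<Sum>m\<in>UNIV. \<Sum>i\<in>UNIV. d m i)"
    by (rule member_le_sum[where f="\<lambda>m. \<Sum>i\<in>UNIV. d m i"]) (auto intro!: sum_nonneg d_nonneg)
  finally show ?thesis using 1 unfolding SA_def by simp
qed

lemma h_cont: "continuous_on UNIV h" by (rule poly_map_cont[OF h_poly])
lemma q_cont: "continuous_on UNIV q" by (rule poly_map_cont[OF q_poly])

lemma bound_F: "\<exists>M>0. \<forall>s\<ge>0. \<forall>i. norm (F s i) \<le> M"
proof -
  obtain R0 where R0: "\<And>s i. s \<ge> 0 \<Longrightarrow> norm (e s i) \<le> R0" using bound_e by blast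
  define K where "K = cball (0::real^'n) (R0 + norm z\<^sub>\<gamma>)"
  have "compact (h ` K)" unfolding K_def
    by (rule compact_continuous_image) (auto intro: continuous_on_subset[OF h_cont])
  then obtain H where H: "H > 0" "\<And>x. x \<in> K \<Longrightarrow> norm (h x) \<le> H"
    using compact_imp_bounded[of "h ` K"] unfolding bounded_pos by auto
  have zK: "z s i \<in> K" if "s \<ge> 0" for s i
  proof -
    have "norm (z s i) \<le> norm (e s i) + norm z\<^sub>\<gamma>" unfolding e_def using norm_triangle_ineq[of "z s i - z\<^sub>\<gamma>" z\<^sub>\<gamma>] by simp
    thus ?thesis using R0[OF that, of i] by (simp add: K_def)
  qed
  have gK: "z\<^sub>\<gamma> \<in> K"
  proof -
    have "0 \<le> R0" using R0[of 0 undefined] norm_ge_zero[of "e 0 undefined"] by linarith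
    thus ?thesis by (simp add: K_def)
  qed
  have dh: "norm (h x - h y) \<le> 2 * H" if "x \<in> K" "y \<in> K" for x y
    using norm_triangle_ineq4[of "h x" "h y"] H(2)[OF that(1)] H(2)[OF that(2)] by simp
  have "norm (F s i) \<le> SA * (2 * H)" if s: "s \<ge> 0" for s i
  proof -
    have "norm (F s i) \<le> (\<Sum>j\<in>UNIV. norm (A (\<sigma> s) i j *\<^sub>R (h (z s j) - h (z s i))))
                          + norm (d (\<sigma> s) i *\<^sub>R (h z\<^sub>\<gamma> - h (z s i)))"
      unfolding F_def by (rule order_trans[OF norm_triangle_ineq add_right_mono[OF norm_sum]])
    also have "\<dots> \<le> (\<Sum>j\<in>UNIV. A (\<sigma> s) i j * (2 * H)) + d (\<sigma> s) i * (2 * H)"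
      using A_nonneg d_nonneg dh zK[OF s] gK
      by (intro add_mono sum_mono) (auto intro!: mult_left_mono)
    also have "\<dots> = ((\<Sum>j\<in>UNIV. A (\<sigma> s) i j) + d (\<sigma> s) i) * (2 * H)"
      by (simp only: sum_distrib_right distrib_right)
    also have "\<dots> \<le> SA * (2 * H)" using row_le H(1) by (intro mult_right_mono) auto
    finally show ?thesis .
  qed
  hence "\<forall>s\<ge>0. \<forall>i. norm (F s i) \<le> SA * (2 * H) + 1" by (metis add_increasing2 zero_le_one)
  moreover have "SA * (2 * H) + 1 > 0"
  proof -
    have "SA \<ge> 0" unfolding SA_def
      by (intro add_nonneg_nonneg sum_nonneg) (auto intro: A_nonneg d_nonneg)
    thus ?thesis using H(1) by (intro add_nonneg_pos mult_nonneg_nonneg) auto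
  qed
  ultimately show ?thesis by blast
qed

lemma lip:
  assumes "0 \<le> a" "a \<le> b" "\<And>s i. s \<ge> 0 \<Longrightarrow> norm (F s i) \<le> M"
  shows "norm (e b i - e a i) \<le> M * (b - a)"
proof -
  have "norm (z b i - z a i) \<le> M * (b - a)"
  proof (rule rderiv_lip[OF assms(2), of _ "\<lambda>s. F s i"])
    show "continuous_on {a..b} (\<lambda>s. z s i)"
      by (rule continuous_on_subset[OF z_cont]) (use assms in auto)
    fix x assume "x \<in> {a..<b}"
    hence x: "x \<ge> 0" using assms by auto
    show "((\<lambda>s. z s i) has_vector_derivative F x i) (at x within {x..})"
      using z_ode[OF x] unfolding F_def .
    show "norm (F x i) \<le> M" using assms(3)[OF x] .
  qed
  thus ?thesis unfolding e_def by simp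
qed

lemma amin: "\<exists>am>0. (\<forall>m i j. A m i j > 0 \<longrightarrow> A m i j \<ge> am) \<and> (\<forall>m i. d m i > 0 \<longrightarrow> d m i \<ge> am)"
proof -
  define P where "P = {x. x > 0 \<and> ((\<exists>m i j. x = A m i j) \<or> (\<exists>m i. x = d m i) \<or> x = 1)}"
  have rA: "A m i j \<in> range (\<lambda>(m,i,j). A m i j)" for m i j
    using rangeI[of "\<lambda>(m,i,j). A m i j" "(m,i,j)"] by simp
  have rd: "d m i \<in> range (\<lambda>(m,i). d m i)" for m i
    using rangeI[of "\<lambda>(m,i). d m i" "(m,i)"] by simp
  have "P \<subseteq> range (\<lambda>(m,i,j). A m i j) \<union> range (\<lambda>(m,i). d m i) \<union> {1}" unfolding P_def using rA rd by blast
  hence fin: "finite P" by (rule finite_subset) auto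
  have ne: "1 \<in> P" unfolding P_def by auto
  define am where "am = Min P"
  have "am \<in> P" unfolding am_def using fin ne Min_in by blast
  hence "am > 0" unfolding P_def by auto
  moreover have "A m i j \<ge> am" if "A m i j > 0" for m i j
    unfolding am_def by (rule Min_le[OF fin]) (unfold P_def, use that in blast)
  moreover have "d m i \<ge> am" if "d m i > 0" for m i
    unfolding am_def by (rule Min_le[OF fin]) (unfold P_def, use that in blast)
  ultimately show ?thesis by blast
qed

lemma Qf_cont: "continuous_on UNIV Qf"
  unfolding Qf_def[abs_def] by (intro continuous_intros)

lemma lam: "\<exists>lm>0. \<forall>y. Qf y \<ge> lm * (norm y)^2"
proof -
  have "continuous_on (sphere (0::real^'p) 1) Qf" by (rule continuous_on_subset[OF Qf_cont]) simp
  moreover have "\<And>x. x \<in> sphere (0::real^'p) 1 \<Longrightarrow> Qf x > 0"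
  proof -
    fix x :: "real^'p" assume "x \<in> sphere 0 1"
    hence "x \<noteq> 0" by auto
    thus "Qf x > 0" unfolding Qf_def by (rule Psi_pd)
  qed
  ultimately obtain lm where l: "lm > 0" "\<And>x. x \<in> sphere 0 1 \<Longrightarrow> Qf x \<ge> lm"
    using compact_pos_min[of "sphere (0::real^'p) 1" Qf] compact_sphere by blast
  have "Qf y \<ge> lm * (norm y)^2" for y
  proof (cases "y = 0")
    case True thus ?thesis by (simp add: Qf_def)
  next
    case False
    define u where "u = y /\<^sub>R norm y"
    have u: "u \<in> sphere 0 1" using False by (simp add: u_def)
    have y: "y = norm y *\<^sub>R u" using False by (simp add: u_def)
    have "Qf y = (norm y)^2 * Qf u"
      by (subst y) (simp add: Qf_def matrix_vector_mult_scaleR power2_eq_square)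
    moreover have "lm * (norm y)^2 \<le> Qf u * (norm y)^2" using l(2)[OF u] by (rule mult_right_mono) simp
    ultimately show ?thesis by (simp add: mult.commute)
  qed
  thus ?thesis using l(1) by blast
qed

lemma V_small: "\<rho> > 0 \<Longrightarrow> \<exists>\<mu>>0. \<forall>x. V x < \<mu> \<longrightarrow> norm x < \<rho>"
proof -
  assume \<rho>: "\<rho> > 0"
  obtain R1 where R1: "\<And>x. norm x \<ge> R1 \<Longrightarrow> V x \<ge> 1" using V_radial[of 1] by blast
  define K where "K = cball (0::real^'n) R1 - ball 0 \<rho>"
  have "compact K" unfolding K_def by (intro compact_diff) auto
  moreover have "continuous_on K V" by (rule continuous_on_subset[OF V_cont]) simp
  moreover have "\<And>x. x \<in> K \<Longrightarrow> V x > 0"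
  proof -
    fix x assume "x \<in> K"
    hence "x \<noteq> 0" using \<rho> by (auto simp: K_def)
    thus "V x > 0" by (rule V_pos)
  qed
  ultimately obtain \<mu>0 where m: "\<mu>0 > 0" "\<And>x. x \<in> K \<Longrightarrow> V x \<ge> \<mu>0"
    using compact_pos_min[of K V] by blast
  have "norm x < \<rho>" if "V x < min \<mu>0 1" for x
  proof (rule ccontr)
    assume "\<not> norm x < \<rho>"
    show False
    proof (cases "norm x \<ge> R1")
      case True thus False using R1[OF True] that by simp
    next
      case False
      hence "x \<in> K" using \<open>\<not> norm x < \<rho>\<close> by (simp add: K_def)
      thus False using m(2)[OF \<open>x \<in> K\<close>] that by simp
    qed
  qed
  thus ?thesis using m(1) by (intro exI[of _ "min \<mu>0 1"]) auto
qed

lemma q_small: "\<rho> > 0 \<Longrightarrow> \<exists>\<mu>>0. \<forall>x. norm x \<le> R \<and> norm (q x) < \<mu> \<longrightarrow> norm x < \<rho>"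
proof -
  assume \<rho>: "\<rho> > 0"
  define K where "K = cball (0::real^'n) R - ball 0 \<rho>"
  have "compact K" unfolding K_def by (intro compact_diff) auto
  moreover have "continuous_on K (\<lambda>x. norm (q x))"
    by (intro continuous_intros continuous_on_subset[OF q_cont]) auto
  moreover have "\<And>x. x \<in> K \<Longrightarrow> norm (q x) > 0"
  proof -
    fix x assume "x \<in> K"
    hence "x \<noteq> 0" using \<rho> by (auto simp: K_def)
    thus "norm (q x) > 0" using q_zero[of x] by simp
  qed
  ultimately obtain \<mu> where m: "\<mu> > 0" "\<And>x. x \<in> K \<Longrightarrow> norm (q x) \<ge> \<mu>"
    using compact_pos_min[of K "\<lambda>x. norm (q x)"] by blast
  have "norm x < \<rho>" if "norm x \<le> R" "norm (q x) < \<mu>" for x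
  proof (rule ccontr)
    assume "\<not> norm x < \<rho>"
    hence "x \<in> K" using that by (simp add: K_def)
    thus False using m(2)[OF \<open>x \<in> K\<close>] that by simp
  qed
  thus ?thesis using m(1) by blast
qed

lemma cont0:
  fixes f :: "real^'n \<Rightarrow> 'b::real_normed_vector"
  assumes "continuous_on UNIV f" "f 0 = 0" "\<eta> > 0"
  shows "\<exists>\<rho>>0. \<forall>x. norm x < \<rho> \<longrightarrow> norm (f x) < \<eta>"
proof -
  obtain r where r: "r > 0" "\<And>x'. dist x' 0 < r \<Longrightarrow> dist (f x') (f 0) < \<eta>"
    using assms(1) assms(3) unfolding continuous_on_iff by blast
  show ?thesis using r assms(2) by (intro exI[of _ r]) (auto simp: dist_norm)
qed

lemma V_cont0: "\<eta> > 0 \<Longrightarrow> \<exists>\<rho>>0. \<forall>x. norm x < \<rho> \<longrightarrow> V x < \<eta>"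
  using cont0[OF V_cont V_zero] V_nonneg by fastforce

lemma q_cont0: "\<eta> > 0 \<Longrightarrow> \<exists>\<rho>>0. \<forall>x. norm x < \<rho> \<longrightarrow> norm (q x) < \<eta>"
  using cont0[OF q_cont q0] by blast

end


lemma path_bound:
  fixes f :: "'a \<Rightarrow> 'b::real_normed_vector"
  assumes "(r ^^ n) u v" "\<And>x y. r x y \<Longrightarrow> norm (f x - f y) \<le> \<epsilon>"
  shows "norm (f v - f u) \<le> real n * \<epsilon>"
  using assms(1)
proof (induction n arbitrary: v)
  case 0 thus ?case by simp
next
  case (Suc n)
  then obtain w where w: "(r ^^ n) u w" "r w v" by auto
  have "norm (f v - f u) \<le> norm (f v - f w) + norm (f w - f u)"
    using norm_triangle_ineq[of "f v - f w" "f w - f u"] by simp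
  also have "\<dots> \<le> \<epsilon> + real n * \<epsilon>"
    using assms(2)[OF w(2)] Suc.IH[OF w(1)] norm_minus_commute[of "f v" "f w"] by simp
  finally show ?case by (simp add: algebra_simps)
qed

lemma rtranclp_len:
  fixes r :: "'a::finite \<Rightarrow> 'a \<Rightarrow> bool"
  assumes "r\<^sup>*\<^sup>* u v"
  shows "\<exists>n \<le> CARD('a \<times> 'a). (r ^^ n) u v"
proof -
  define R where "R = {(x, y). r x y}"
  have rR: "r = (\<lambda>x y. (x, y) \<in> R)" by (simp add: R_def)
  have "(u, v) \<in> R\<^sup>*" using assms unfolding rR rtranclp_rtrancl_eq by simp
  also have "R\<^sup>* = (\<Union>n\<in>{n. n \<le> card R}. R ^^ n)" by (rule rtrancl_finite_eq_relpow) simp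
  finally obtain n where n: "n \<le> card R" "(u, v) \<in> R ^^ n" by blast
  have "card R \<le> CARD('a \<times> 'a)" by (rule card_mono) auto
  moreover have "(r ^^ n) u v" using n(2) unfolding rR relpowp_relpow_eq .
  ultimately show ?thesis using n(1) by (intro exI[of _ n]) auto
qed

lemma crossing:
  assumes "r\<^sup>*\<^sup>* u v" "P u" "\<not> P v"
  shows "\<exists>x y. r x y \<and> P x \<and> \<not> P y"
  using assms
proof (induction rule: rtranclp_induct)
  case base thus ?case by simp
next
  case (step y z)
  show ?case
  proof (cases "P y")
    case True thus ?thesis using step.hyps(2) step.prems(2) by blast
  next
    case False thus ?thesis using step.IH step.prems(1) by blast
  qed
qed

lemma interval_cover:
  fixes a :: "nat \<Rightarrow> real"
  assumes "\<And>l. l < n \<Longrightarrow> a l \<le> a (Suc l)" "r \<in> {a 0..<a n}"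
  shows "\<exists>l<n. r \<in> {a l..<a (Suc l)}"
  using assms
proof (induction n)
  case 0 thus ?case by simp
next
  case (Suc n)
  show ?case
  proof (cases "r < a n")
    case True
    hence "\<exists>l<n. r \<in> {a l..<a (Suc l)}" using Suc by auto
    thus ?thesis by (auto intro: less_SucI)
  next
    case False thus ?thesis using Suc.prems by (intro exI[of _ n]) auto
  qed
qed

context sys begin

definition adj :: "'m \<Rightarrow> 'f option \<Rightarrow> 'f option \<Rightarrow> bool" where
  "adj m u v \<longleftrightarrow> (case (u, v) of
        (Some i, Some j) \<Rightarrow> i \<noteq> j \<and> A m i j > 0
      | (None, Some i) \<Rightarrow> d m i > 0
      | (Some i, None) \<Rightarrow> d m i > 0
      | (None, None) \<Rightarrow> False)"

definition "reach m = (adj m)\<^sup>*\<^sup>*"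

definition "Rstep m S = {i. reach m None (Some i) \<or> (\<exists>j\<in>S. reach m (Some j) (Some i))}"

lemma Rstep_ext: "S \<subseteq> Rstep m S"
  unfolding Rstep_def reach_def by auto

lemma Rstep_mono: "S \<subseteq> S' \<Longrightarrow> Rstep m S \<subseteq> Rstep m S'"
  unfolding Rstep_def by auto

lemma step:
  assumes \<tau>0: "\<tau>0 > 0" and \<eta>: "\<eta> > 0"
  shows "\<exists>\<eta>'>0. \<exists>\<delta>>0. \<forall>a b S. 0 \<le> a \<longrightarrow> a + \<tau>0 \<le> b \<longrightarrow> (\<forall>r\<in>{a..<b}. \<sigma> r = \<sigma> a) \<longrightarrow>
     W a - W b < \<delta> \<longrightarrow> (\<forall>i\<in>S. V (e a i) < \<eta>') \<longrightarrow> (\<forall>i\<in>Rstep (\<sigma> a) S. V (e b i) < \<eta>)"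
proof -
  obtain R0 where R0: "\<And>s i. s \<ge> 0 \<Longrightarrow> norm (e s i) \<le> R0" using bound_e by blast
  obtain M where M: "M > 0" "\<And>s i. s \<ge> 0 \<Longrightarrow> norm (F s i) \<le> M" using bound_F by blast
  obtain am where am: "am > 0" "\<And>m i j. A m i j > 0 \<Longrightarrow> A m i j \<ge> am" "\<And>m i. d m i > 0 \<Longrightarrow> d m i \<ge> am"
    using amin by blast
  obtain lm where lm: "lm > 0" "\<And>y. Qf y \<ge> lm * (norm y)^2" using lam by blast
  define N where "N = real CARD('f)"
  have N: "N \<ge> 1" unfolding N_def using finite_UNIV_card_ge_0[where 'a='f] by simp
  obtain \<rho>1 where \<rho>1: "\<rho>1 > 0" "\<And>x. norm x < \<rho>1 \<Longrightarrow> V x < \<eta> / N"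
    using V_cont0[of "\<eta> / N"] \<eta> N by auto
  obtain \<mu>1 where \<mu>1: "\<mu>1 > 0" "\<And>x. norm x \<le> R0 \<Longrightarrow> norm (q x) < \<mu>1 \<Longrightarrow> norm x < \<rho>1"
    using q_small[OF \<rho>1(1), of R0] by blast
  obtain \<rho>2 where \<rho>2: "\<rho>2 > 0" "\<And>x. norm x < \<rho>2 \<Longrightarrow> norm (q x) < \<mu>1 / 2"
    using q_cont0[of "\<mu>1 / 2"] \<mu>1 by auto
  obtain \<eta>' where \<eta>': "\<eta>' > 0" "\<And>x. V x < \<eta>' \<Longrightarrow> norm x < \<rho>2 / 2"
    using V_small[of "\<rho>2 / 2"] \<rho>2 by auto
  define w where "w = min \<tau>0 (\<rho>2 / (2 * (M + 1)))"
  have w: "w > 0" "w \<le> \<tau>0" "M * w < \<rho>2 / 2"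
  proof -
    show "w > 0" "w \<le> \<tau>0" using \<tau>0 \<rho>2 M by (auto simp: w_def)
    have "M * w \<le> M * (\<rho>2 / (2 * (M + 1)))" using M by (intro mult_left_mono) (auto simp: w_def)
    also have "\<dots> = (\<rho>2 / 2) * (M / (M + 1))" by (simp add: field_simps)
    also have "\<dots> < (\<rho>2 / 2) * 1" using M \<rho>2 by (intro mult_strict_left_mono) auto
    finally show "M * w < \<rho>2 / 2" by simp
  qed
  define K where "K = CARD('f option \<times> 'f option)"
  define \<epsilon> where "\<epsilon> = \<mu>1 / (2 * (real K + 1))"
  have \<epsilon>: "\<epsilon> > 0" "real K * \<epsilon> < \<mu>1 / 2"
  proof -
    show "\<epsilon> > 0" using \<mu>1 by (simp add: \<epsilon>_def)
    have "real K * \<epsilon> = (\<mu>1 / 2) * (real K / (real K + 1))" by (simp add: \<epsilon>_def field_simps)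
    also have "\<dots> < (\<mu>1 / 2) * 1" using \<mu>1 by (intro mult_strict_left_mono) auto
    finally show "real K * \<epsilon> < \<mu>1 / 2" by simp
  qed
  define c where "c = am * lm * \<epsilon>^2 / 2"
  have c: "c > 0" using am lm \<epsilon> by (simp add: c_def)
  have cw: "c * w > 0" using c w by simp
  have main: "\<forall>a b S. 0 \<le> a \<longrightarrow> a + \<tau>0 \<le> b \<longrightarrow> (\<forall>r\<in>{a..<b}. \<sigma> r = \<sigma> a) \<longrightarrow>
     W a - W b < c * w \<longrightarrow> (\<forall>i\<in>S. V (e a i) < \<eta>') \<longrightarrow> (\<forall>i\<in>Rstep (\<sigma> a) S. V (e b i) < \<eta>)"
  proof (intro allI impI)
    fix a b S
    assume a0: "0 \<le> a" and ab: "a + \<tau>0 \<le> b" and sc: "\<forall>r\<in>{a..<b}. \<sigma> r = \<sigma> a"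
      and drop: "W a - W b < c * w" and Ssm: "\<forall>i\<in>S. V (e a i) < \<eta>'"
    define m where "m = \<sigma> a"
    have "\<exists>s1\<in>{a..<a+w}. Dis UNIV s1 < c"
    proof (rule ccontr)
      assume "\<not> ?thesis"
      hence "\<And>r. r \<in> {a..<a+w} \<Longrightarrow> Dis UNIV r \<ge> c" by (auto simp: not_less)
      hence "W (a + w) + c * (a + w - a) \<le> W a" using a0 w by (intro W_drop) auto
      moreover have "W b \<le> W (a + w)" using a0 w ab by (intro W_mono) auto
      ultimately show False using drop by simp
    qed
    then obtain s1 where s1: "s1 \<in> {a..<a+w}" "Dis UNIV s1 < c" by blast
    have s1b: "s1 \<in> {a..<b}" using s1 w ab by auto
    have s10: "s1 \<ge> 0" using s1 a0 by auto
    have ms1: "\<sigma> s1 = m" using sc s1b unfolding m_def by blast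
    define qv where "qv u = (case u of None \<Rightarrow> 0 | Some i \<Rightarrow> q (e s1 i))" for u
    have sq: "norm y < \<epsilon>" if "am * (lm * (norm y)^2) < 2 * c" for y :: "real^'p"
    proof -
      have c2: "2 * c = am * lm * \<epsilon>^2" by (simp add: c_def)
      have "am * lm * (norm y)^2 = am * (lm * (norm y)^2)" by (simp add: mult.assoc)
      hence "am * lm * (norm y)^2 < am * lm * \<epsilon>^2" using that c2 by linarith
      moreover have "am * lm > 0" using am lm by simp
      ultimately have "(norm y)^2 < \<epsilon>^2" using mult_less_cancel_left_pos[of "am * lm" "(norm y)^2" "\<epsilon>^2"] by simp
      thus ?thesis by (rule power_less_imp_less_base) (use \<epsilon> in linarith)
    qed
    have edge: "norm (qv x - qv y) \<le> \<epsilon>" if xy: "adj m x y" for x y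
    proof -
      consider (ff) i j where "x = Some i" "y = Some j" "A m i j > 0"
        | (lf) i where "x = None" "y = Some i" "d m i > 0"
        | (fl) i where "x = Some i" "y = None" "d m i > 0"
        using xy by (cases x; cases y) (auto simp: adj_def)
      then show ?thesis
      proof cases
        case ff
        have "am * (lm * (norm (q (e s1 i) - q (e s1 j)))^2) \<le> A m i j * T s1 i j"
          using am(2)[OF ff(3)] lm(2)[of "q (e s1 i) - q (e s1 j)"] T_ge[of s1 i j] am(1) lm(1)
          by (intro mult_mono) auto
        also have "\<dots> \<le> 2 * Dis UNIV s1" using edge_le_Dis[of s1 i j] ms1 by simp
        also have "\<dots> < 2 * c" using s1 by simp
        finally show ?thesis using sq ff by (simp add: qv_def less_imp_le)
      next
        case lf
        have "am * (lm * (norm (q (e s1 i)))^2) \<le> d m i * T0 s1 i"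
          using am(3)[OF lf(3)] lm(2)[of "q (e s1 i)"] T0_ge[of s1 i] am(1) lm(1)
          by (intro mult_mono) auto
        also have "\<dots> \<le> Dis UNIV s1" using leader_le_Dis[of s1 i] ms1 by simp
        also have "\<dots> < 2 * c" using s1 c by simp
        finally show ?thesis using sq[of "q (e s1 i)"] lf by (simp add: qv_def less_imp_le)
      next
        case fl
        have "am * (lm * (norm (q (e s1 i)))^2) \<le> d m i * T0 s1 i"
          using am(3)[OF fl(3)] lm(2)[of "q (e s1 i)"] T0_ge[of s1 i] am(1) lm(1)
          by (intro mult_mono) auto
        also have "\<dots> \<le> Dis UNIV s1" using leader_le_Dis[of s1 i] ms1 by simp
        also have "\<dots> < 2 * c" using s1 c by simp
        finally show ?thesis using sq[of "q (e s1 i)"] fl by (simp add: qv_def less_imp_le)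
      qed
    qed
    have start: "norm (qv u) < \<mu>1 / 2" if "u \<in> insert None (Some ` S)" for u
    proof (cases u)
      case None thus ?thesis using \<mu>1 by (simp add: qv_def)
    next
      case (Some j)
      hence j: "j \<in> S" using that by auto
      have "norm (e a j) < \<rho>2 / 2" using \<eta>'(2) Ssm j by blast
      moreover have "norm (e s1 j - e a j) \<le> M * (s1 - a)" using s1 a0 M(2) by (intro lip) auto
      moreover have "M * (s1 - a) \<le> M * w" using s1 M by (intro mult_left_mono) auto
      ultimately have "norm (e s1 j) < \<rho>2"
        using w norm_triangle_ineq[of "e s1 j - e a j" "e a j"] by simp
      thus ?thesis using \<rho>2(2) Some by (simp add: qv_def)
    qed
    have reach_small: "V (e s1 k) < \<eta> / N"
      if uS: "u \<in> insert None (Some ` S)" and ur: "reach m u (Some k)" for u k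
    proof -
      obtain n where n: "n \<le> K" "(adj m ^^ n) u (Some k)"
        using rtranclp_len[OF ur[unfolded reach_def]] unfolding K_def by blast
      have "norm (qv (Some k) - qv u) \<le> real n * \<epsilon>" by (rule path_bound[OF n(2) edge])
      also have "\<dots> \<le> real K * \<epsilon>" using n(1) \<epsilon> by (intro mult_right_mono) auto
      finally have "norm (qv (Some k) - qv u) < \<mu>1 / 2" using \<epsilon> by simp
      hence "norm (qv (Some k)) < \<mu>1"
        using start[OF uS] norm_triangle_ineq[of "qv (Some k) - qv u" "qv u"] by simp
      hence "norm (q (e s1 k)) < \<mu>1" by (simp add: qv_def)
      hence "norm (e s1 k) < \<rho>1" using \<mu>1(2) R0[OF s10] by blast
      thus ?thesis using \<rho>1(2) by blast
    qed
    show "\<forall>i\<in>Rstep (\<sigma> a) S. V (e b i) < \<eta>"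
    proof
      fix i assume "i \<in> Rstep (\<sigma> a) S"
      then obtain u where u: "u \<in> insert None (Some ` S)" "reach m u (Some i)"
        by (auto simp: Rstep_def m_def)
      define C where "C = {k. reach m u (Some k)}"
      have iC: "i \<in> C" using u by (simp add: C_def)
      have clC: "closed_set m C" unfolding closed_set_def
      proof (intro ballI allI impI)
        fix k j assume k: "k \<in> C" and nz: "A m k j \<noteq> 0"
        have "A m k j > 0" using nz A_nonneg[of m k j] by simp
        moreover have "k \<noteq> j" using nz A_diag by auto
        ultimately have "adj m (Some k) (Some j)" by (simp add: adj_def)
        thus "j \<in> C" using k unfolding C_def reach_def by (auto intro: rtranclp.rtrancl_into_rtrancl)
      qed
      have "U C s1 < (\<Sum>k\<in>C. \<eta> / N)"
        unfolding U_def using iC reach_small u(1) by (intro sum_strict_mono) (auto simp: C_def)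
      also have "\<dots> = real (card C) * (\<eta> / N)" by simp
      also have "\<dots> \<le> N * (\<eta> / N)" using \<eta> N
        by (intro mult_right_mono) (auto simp: N_def card_mono)
      also have "\<dots> = \<eta>" using N by simp
      finally have "U C s1 < \<eta>" .
      moreover have "U C b \<le> U C s1"
      proof (rule U_mono)
        show "0 \<le> s1" "s1 \<le> b" using s10 s1b by auto
        fix r assume "r \<in> {s1..<b}"
        hence "r \<in> {a..<b}" using s1b by auto
        hence "\<sigma> r = m" using sc unfolding m_def by blast
        thus "closed_set (\<sigma> r) C" using clC by simp
      qed
      moreover have "V (e b i) \<le> U C b" using iC by (intro V_le_U) auto
      ultimately show "V (e b i) < \<eta>" by simp
    qed
  qed
  show ?thesis using main cw \<eta>'(1) by blast
qed

end


context sys begin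

definition "chain_ok \<tau>0 a n \<longleftrightarrow> 0 \<le> a 0 \<and>
   (\<forall>l<n. a l + \<tau>0 \<le> a (Suc l) \<and> (\<forall>r\<in>{a l..<a (Suc l)}. \<sigma> r = \<sigma> (a l)))"

primrec Phi :: "(nat \<Rightarrow> real) \<Rightarrow> nat \<Rightarrow> 'f set \<Rightarrow> 'f set" where
  "Phi a 0 S = S"
| "Phi a (Suc l) S = Rstep (\<sigma> (a l)) (Phi a l S)"

lemma chain_ok_Suc: "chain_ok \<tau>0 a (Suc n) \<Longrightarrow> chain_ok \<tau>0 a n"
  unfolding chain_ok_def by auto

lemma chain_incr:
  assumes "chain_ok \<tau>0 a n" "\<tau>0 > 0" "l \<le> n"
  shows "a 0 \<le> a l"
  using assms(3)
proof (induction l)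
  case 0 thus ?case by simp
next
  case (Suc l)
  hence "a l + \<tau>0 \<le> a (Suc l)" using assms(1) unfolding chain_ok_def by auto
  thus ?case using Suc assms(2) by simp
qed

lemma claim_exact:
  assumes \<tau>0: "\<tau>0 > 0"
  shows "\<forall>\<eta>>0. \<exists>\<eta>'>0. \<exists>\<delta>>0. \<forall>a S. chain_ok \<tau>0 a n \<longrightarrow> W (a 0) - W (a n) < \<delta> \<longrightarrow>
     (\<forall>i\<in>S. V (e (a 0) i) < \<eta>') \<longrightarrow> (\<forall>i\<in>Phi a n S. V (e (a n) i) < \<eta>)"
proof (induction n)
  case 0
  show ?case
  proof (intro allI impI)
    fix \<eta> :: real assume "\<eta> > 0"
    thus "\<exists>\<eta>'>0. \<exists>\<delta>>0. \<forall>a S. chain_ok \<tau>0 a 0 \<longrightarrow> W (a 0) - W (a 0) < \<delta> \<longrightarrow>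
     (\<forall>i\<in>S. V (e (a 0) i) < \<eta>') \<longrightarrow> (\<forall>i\<in>Phi a 0 S. V (e (a 0) i) < \<eta>)"
      by (intro exI[of _ \<eta>] exI[of _ 1]) auto
  qed
next
  case (Suc n)
  show ?case
  proof (intro allI impI)
    fix \<eta> :: real assume \<eta>: "\<eta> > 0"
    obtain \<eta>1 \<delta>1 where s: "\<eta>1 > 0" "\<delta>1 > 0" "\<And>a b S. 0 \<le> a \<Longrightarrow> a + \<tau>0 \<le> b \<Longrightarrow> (\<forall>r\<in>{a..<b}. \<sigma> r = \<sigma> a) \<Longrightarrow>
     W a - W b < \<delta>1 \<Longrightarrow> (\<forall>i\<in>S. V (e a i) < \<eta>1) \<Longrightarrow> (\<forall>i\<in>Rstep (\<sigma> a) S. V (e b i) < \<eta>)"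
      using step[OF \<tau>0 \<eta>] by blast
    obtain \<eta>' \<delta>2 where ih: "\<eta>' > 0" "\<delta>2 > 0" "\<And>a S. chain_ok \<tau>0 a n \<Longrightarrow> W (a 0) - W (a n) < \<delta>2 \<Longrightarrow>
     (\<forall>i\<in>S. V (e (a 0) i) < \<eta>') \<Longrightarrow> (\<forall>i\<in>Phi a n S. V (e (a n) i) < \<eta>1)"
      using Suc.IH s(1) by blast
    have hm: "\<forall>a S. chain_ok \<tau>0 a (Suc n) \<longrightarrow> W (a 0) - W (a (Suc n)) < min \<delta>1 \<delta>2 \<longrightarrow>
     (\<forall>i\<in>S. V (e (a 0) i) < \<eta>') \<longrightarrow> (\<forall>i\<in>Phi a (Suc n) S. V (e (a (Suc n)) i) < \<eta>)"
    proof (intro allI impI)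
      fix a S
      assume ch: "chain_ok \<tau>0 a (Suc n)" and dr: "W (a 0) - W (a (Suc n)) < min \<delta>1 \<delta>2"
        and sm: "\<forall>i\<in>S. V (e (a 0) i) < \<eta>'"
      have ch': "chain_ok \<tau>0 a n" using chain_ok_Suc[OF ch] .
      have a00: "0 \<le> a 0" using ch by (simp add: chain_ok_def)
      have an: "a 0 \<le> a n" using chain_incr[OF ch \<tau>0] by simp
      have gap: "a n + \<tau>0 \<le> a (Suc n)" and sc: "\<forall>r\<in>{a n..<a (Suc n)}. \<sigma> r = \<sigma> (a n)"
        using ch unfolding chain_ok_def by auto
      have W1: "W (a (Suc n)) \<le> W (a n)" using a00 an gap \<tau>0 by (intro W_mono) auto
      have W2: "W (a n) \<le> W (a 0)" using a00 an by (intro W_mono) auto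
      have "\<forall>i\<in>Phi a n S. V (e (a n) i) < \<eta>1"
        by (rule ih(3)[OF ch' _ sm]) (use dr W1 in linarith)
      note p1 = this
      have "\<forall>i\<in>Rstep (\<sigma> (a n)) (Phi a n S). V (e (a (Suc n)) i) < \<eta>"
      proof (rule s(3)[of "a n" "a (Suc n)" "Phi a n S"])
        show "0 \<le> a n" using a00 an by linarith
        show "a n + \<tau>0 \<le> a (Suc n)" by (rule gap)
        show "\<forall>r\<in>{a n..<a (Suc n)}. \<sigma> r = \<sigma> (a n)" by (rule sc)
        show "W (a n) - W (a (Suc n)) < \<delta>1" using dr W2 by linarith
        show "\<forall>i\<in>Phi a n S. V (e (a n) i) < \<eta>1" by (rule p1)
      qed
      thus "\<forall>i\<in>Phi a (Suc n) S. V (e (a (Suc n)) i) < \<eta>" by simp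
    qed
    show "\<exists>\<eta>'>0. \<exists>\<delta>>0. \<forall>a S. chain_ok \<tau>0 a (Suc n) \<longrightarrow> W (a 0) - W (a (Suc n)) < \<delta> \<longrightarrow>
     (\<forall>i\<in>S. V (e (a 0) i) < \<eta>') \<longrightarrow> (\<forall>i\<in>Phi a (Suc n) S. V (e (a (Suc n)) i) < \<eta>)"
    proof -
      have "min \<delta>1 \<delta>2 > 0" using s(2) ih(2) by simp
      thus ?thesis using ih(1) hm by blast
    qed
  qed
qed

lemma claim_le:
  assumes \<tau>0: "\<tau>0 > 0"
  shows "\<forall>\<eta>>0. \<exists>\<eta>'>0. \<exists>\<delta>>0. \<forall>a n' S. n' \<le> n \<longrightarrow> chain_ok \<tau>0 a n' \<longrightarrow> W (a 0) - W (a n') < \<delta> \<longrightarrow>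
     (\<forall>i\<in>S. V (e (a 0) i) < \<eta>') \<longrightarrow> (\<forall>i\<in>Phi a n' S. V (e (a n') i) < \<eta>)"
proof (induction n)
  case 0
  show ?case using claim_exact[OF \<tau>0, of 0] by simp
next
  case (Suc n)
  show ?case
  proof (intro allI impI)
    fix \<eta> :: real assume \<eta>: "\<eta> > 0"
    obtain \<eta>1 \<delta>1 where c1: "\<eta>1 > 0" "\<delta>1 > 0" "\<And>a n' S. n' \<le> n \<Longrightarrow> chain_ok \<tau>0 a n' \<Longrightarrow> W (a 0) - W (a n') < \<delta>1 \<Longrightarrow>
     (\<forall>i\<in>S. V (e (a 0) i) < \<eta>1) \<Longrightarrow> (\<forall>i\<in>Phi a n' S. V (e (a n') i) < \<eta>)"
      using Suc.IH \<eta> by blast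
    obtain \<eta>2 \<delta>2 where c2: "\<eta>2 > 0" "\<delta>2 > 0" "\<And>a S. chain_ok \<tau>0 a (Suc n) \<Longrightarrow> W (a 0) - W (a (Suc n)) < \<delta>2 \<Longrightarrow>
     (\<forall>i\<in>S. V (e (a 0) i) < \<eta>2) \<Longrightarrow> (\<forall>i\<in>Phi a (Suc n) S. V (e (a (Suc n)) i) < \<eta>)"
      using claim_exact[OF \<tau>0, of "Suc n"] \<eta> by blast
    have hm: "\<forall>a n' S. n' \<le> Suc n \<longrightarrow> chain_ok \<tau>0 a n' \<longrightarrow> W (a 0) - W (a n') < min \<delta>1 \<delta>2 \<longrightarrow>
     (\<forall>i\<in>S. V (e (a 0) i) < min \<eta>1 \<eta>2) \<longrightarrow> (\<forall>i\<in>Phi a n' S. V (e (a n') i) < \<eta>)"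
    proof (intro allI impI)
      fix a n' S assume n': "n' \<le> Suc n" and ch: "chain_ok \<tau>0 a n'"
        and dr: "W (a 0) - W (a n') < min \<delta>1 \<delta>2" and sm: "\<forall>i\<in>S. V (e (a 0) i) < min \<eta>1 \<eta>2"
      show "\<forall>i\<in>Phi a n' S. V (e (a n') i) < \<eta>"
      proof (cases "n' = Suc n")
        case True
        thus ?thesis using c2(3)[of a S] ch dr sm by simp
      next
        case False
        hence "n' \<le> n" using n' by simp
        thus ?thesis using c1(3)[of n' a S] ch dr sm by simp
      qed
    qed
    show "\<exists>\<eta>'>0. \<exists>\<delta>>0. \<forall>a n' S. n' \<le> Suc n \<longrightarrow> chain_ok \<tau>0 a n' \<longrightarrow> W (a 0) - W (a n') < \<delta> \<longrightarrow>
     (\<forall>i\<in>S. V (e (a 0) i) < \<eta>') \<longrightarrow> (\<forall>i\<in>Phi a n' S. V (e (a n') i) < \<eta>)"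
    proof -
      have "min \<eta>1 \<eta>2 > 0" "min \<delta>1 \<delta>2 > 0" using c1(1,2) c2(1,2) by auto
      thus ?thesis using hm by blast
    qed
  qed
qed

lemma Phi_ext_step: "Phi a l S \<subseteq> Phi a (Suc l) S"
  by (simp add: Rstep_ext)

lemma Phi_mono_le: "l \<le> n \<Longrightarrow> Phi a l S \<subseteq> Phi a n S"
  using lift_Suc_mono_le[of "\<lambda>l. Phi a l S", OF Phi_ext_step] by blast

lemma Phi_ext: "S \<subseteq> Phi a n S"
  using Phi_mono_le[of 0 n a S] by simp

end


context sys begin

definition "sw_ok \<tau>0 B ss TT \<longleftrightarrow> \<tau>0 > 0 \<and> t 0 = 0 \<and> (\<forall>k. t k < t (Suc k)) \<and> (\<forall>k. t (Suc k) - t k \<le> B) \<and>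
   (\<forall>k. TT k 0 = t k \<and> TT k (ss k) = t (Suc k) \<and>
     (\<forall>l<ss k. TT k (Suc l) - TT k l \<ge> \<tau>0 \<and> (\<forall>r\<in>{TT k l..<TT k (Suc l)}. \<sigma> r = \<sigma> (TT k l))))"

context
  fixes \<tau>0 B ss TT assumes sw: "sw_ok \<tau>0 B ss TT"
begin
lemma sw_tau: "\<tau>0 > 0" using sw unfolding sw_ok_def by blast
lemma sw_t0: "t 0 = 0" using sw unfolding sw_ok_def by blast
lemma sw_tinc: "t k < t (Suc k)" using sw unfolding sw_ok_def by blast
lemma sw_B: "t (Suc k) - t k \<le> B" using sw unfolding sw_ok_def by blast
lemma sw_TT0: "TT k 0 = t k" using sw unfolding sw_ok_def by blast
lemma sw_TTs: "TT k (ss k) = t (Suc k)" using sw unfolding sw_ok_def by blast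
lemma sw_gap: "l < ss k \<Longrightarrow> TT k (Suc l) - TT k l \<ge> \<tau>0" using sw unfolding sw_ok_def by blast
lemma sw_const: "l < ss k \<Longrightarrow> r \<in> {TT k l..<TT k (Suc l)} \<Longrightarrow> \<sigma> r = \<sigma> (TT k l)"
  using sw unfolding sw_ok_def by blast
end

lemma sw_exists: "\<exists>\<tau>0 B ss TT. sw_ok \<tau>0 B ss TT"
proof -
  obtain B where B: "\<forall>k. t (Suc k) - t k \<le> B" using switching unfolding admissible_switching_def by blast
  have t0: "t 0 = 0" and tinc: "\<forall>k. t k < t (Suc k)" using switching unfolding admissible_switching_def by auto
  define P where "P \<tau>0 k s tt \<longleftrightarrow> tt 0 = t k \<and> tt s = t (Suc k) \<and>
        (\<forall>l<s. tt (Suc l) - tt l \<ge> \<tau>0 \<and> (\<forall>r\<in>{tt l..<tt (Suc l)}. \<sigma> r = \<sigma> (tt l)))"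
    for \<tau>0 k and s :: nat and tt :: "nat \<Rightarrow> real"
  obtain \<tau>0 where \<tau>: "\<tau>0 > 0" "\<forall>k. \<exists>s tt. P \<tau>0 k s tt"
    using switching unfolding admissible_switching_def P_def by blast
  have "\<forall>k. \<exists>p. P \<tau>0 k (fst p) (snd p)" using \<tau>(2) by auto
  then obtain f where f: "\<forall>k. P \<tau>0 k (fst (f k)) (snd (f k))" by (metis choice)
  have Pk: "\<And>k. snd (f k) 0 = t k \<and> snd (f k) (fst (f k)) = t (Suc k) \<and>
        (\<forall>l<fst (f k). \<tau>0 \<le> snd (f k) (Suc l) - snd (f k) l \<and>
         (\<forall>r\<in>{snd (f k) l..<snd (f k) (Suc l)}. \<sigma> r = \<sigma> (snd (f k) l)))"
    using f unfolding P_def by blast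
  have "sw_ok \<tau>0 B (\<lambda>k. fst (f k)) (\<lambda>k. snd (f k))"
    unfolding sw_ok_def using \<tau>(1) t0 tinc B Pk by blast
  thus ?thesis by blast
qed

lemma TT_lin:
  assumes "sw_ok \<tau>0 B ss TT" "l \<le> ss k"
  shows "TT k 0 + real l * \<tau>0 \<le> TT k l"
  using assms(2)
proof (induction l)
  case 0 thus ?case by simp
next
  case (Suc l)
  hence "TT k (Suc l) - TT k l \<ge> \<tau>0" using sw_gap[OF assms(1)] by simp
  thus ?case using Suc by (simp add: algebra_simps)
qed

lemma ss_pos:
  assumes "sw_ok \<tau>0 B ss TT" shows "ss k \<ge> 1"
proof (rule ccontr)
  assume "\<not> ss k \<ge> 1"
  hence "ss k = 0" by simp
  hence "t (Suc k) = t k" using sw_TT0[OF assms, of k] sw_TTs[OF assms, of k] by simp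
  thus False using sw_tinc[OF assms, of k] by simp
qed

lemma t_step:
  assumes "sw_ok \<tau>0 B ss TT" shows "t k + \<tau>0 \<le> t (Suc k)"
proof -
  have "TT k 0 + real (ss k) * \<tau>0 \<le> TT k (ss k)" by (rule TT_lin[OF assms]) simp
  moreover have "real (ss k) * \<tau>0 \<ge> 1 * \<tau>0" using ss_pos[OF assms, of k] sw_tau[OF assms]
    by (intro mult_right_mono) auto
  moreover have "TT k 0 = t k" "TT k (ss k) = t (Suc k)" using sw_TT0[OF assms] sw_TTs[OF assms] by auto
  ultimately show ?thesis by simp
qed

lemma t_lin:
  assumes "sw_ok \<tau>0 B ss TT" shows "real k * \<tau>0 \<le> t k"
proof (induction k)
  case 0 thus ?case using sw_t0[OF assms] by simp
next
  case (Suc k) thus ?case using t_step[OF assms, of k] by (simp add: algebra_simps)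
qed

lemma t_mono:
  assumes "sw_ok \<tau>0 B ss TT" "k \<le> k'" shows "t k \<le> t k'"
proof -
  have "\<And>k. t k \<le> t (Suc k)" using sw_tinc[OF assms(1)] by (simp add: less_imp_le)
  thus ?thesis using lift_Suc_mono_le[of t, OF _ assms(2)] by blast
qed

lemma t_nonneg:
  assumes "sw_ok \<tau>0 B ss TT" shows "0 \<le> t k"
  using t_mono[OF assms, of 0 k] sw_t0[OF assms] by simp

lemma ss_bound:
  assumes "sw_ok \<tau>0 B ss TT" shows "ss k \<le> nat \<lceil>B / \<tau>0\<rceil>"
proof -
  have \<tau>0: "\<tau>0 > 0" using sw_tau[OF assms] .
  have "TT k 0 + real (ss k) * \<tau>0 \<le> TT k (ss k)" by (rule TT_lin[OF assms]) simp
  moreover have "TT k 0 = t k" "TT k (ss k) = t (Suc k)" "t (Suc k) - t k \<le> B"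
    using sw_TT0[OF assms] sw_TTs[OF assms] sw_B[OF assms] by auto
  ultimately have "real (ss k) * \<tau>0 \<le> B" by simp
  hence "real (ss k) \<le> B / \<tau>0" using \<tau>0 by (simp add: field_simps)
  hence "real (ss k) \<le> real_of_int \<lceil>B / \<tau>0\<rceil>" using le_of_int_ceiling order_trans by blast
  hence "int (ss k) \<le> \<lceil>B / \<tau>0\<rceil>" by linarith
  thus ?thesis by linarith
qed

lemma chain_TT:
  assumes "sw_ok \<tau>0 B ss TT" shows "chain_ok \<tau>0 (TT k) (ss k)"
proof -
  have "TT k 0 = t k" using sw_TT0[OF assms] by auto
  hence "0 \<le> TT k 0" using t_nonneg[OF assms] by simp
  moreover have "\<forall>l<ss k. TT k l + \<tau>0 \<le> TT k (Suc l) \<and> (\<forall>r\<in>{TT k l..<TT k (Suc l)}. \<sigma> r = \<sigma> (TT k l))"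
  proof (intro allI impI conjI)
    fix l assume l: "l < ss k"
    show "TT k l + \<tau>0 \<le> TT k (Suc l)" using sw_gap[OF assms l] by simp
    show "\<forall>r\<in>{TT k l..<TT k (Suc l)}. \<sigma> r = \<sigma> (TT k l)" using sw_const[OF assms l] by blast
  qed
  ultimately show ?thesis unfolding chain_ok_def by blast
qed

lemma period_claim:
  assumes sw: "sw_ok \<tau>0 B ss TT" and \<eta>: "\<eta> > 0"
  shows "\<exists>\<eta>'>0. \<exists>\<delta>>0. \<forall>k S. W (t k) - W (t (Suc k)) < \<delta> \<longrightarrow> (\<forall>i\<in>S. V (e (t k) i) < \<eta>') \<longrightarrow>
      (\<forall>i\<in>Phi (TT k) (ss k) S. V (e (t (Suc k)) i) < \<eta>)"
proof -
  have \<tau>0: "\<tau>0 > 0" using sw_tau[OF sw] .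
  obtain \<eta>' \<delta> where c: "\<eta>' > 0" "\<delta> > 0" "\<And>a n' S. n' \<le> nat \<lceil>B / \<tau>0\<rceil> \<Longrightarrow> chain_ok \<tau>0 a n' \<Longrightarrow>
      W (a 0) - W (a n') < \<delta> \<Longrightarrow> (\<forall>i\<in>S. V (e (a 0) i) < \<eta>') \<Longrightarrow> (\<forall>i\<in>Phi a n' S. V (e (a n') i) < \<eta>)"
    using claim_le[OF \<tau>0, of "nat \<lceil>B / \<tau>0\<rceil>"] \<eta> by blast
  have "\<forall>k S. W (t k) - W (t (Suc k)) < \<delta> \<longrightarrow> (\<forall>i\<in>S. V (e (t k) i) < \<eta>') \<longrightarrow>
      (\<forall>i\<in>Phi (TT k) (ss k) S. V (e (t (Suc k)) i) < \<eta>)"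
  proof (intro allI impI)
    fix k S assume dr: "W (t k) - W (t (Suc k)) < \<delta>" and sm: "\<forall>i\<in>S. V (e (t k) i) < \<eta>'"
    have T: "TT k 0 = t k" "TT k (ss k) = t (Suc k)" using sw_TT0[OF sw] sw_TTs[OF sw] by auto
    show "\<forall>i\<in>Phi (TT k) (ss k) S. V (e (t (Suc k)) i) < \<eta>"
      using c(3)[OF ss_bound[OF sw, of k] chain_TT[OF sw, of k], of S] dr sm T by simp
  qed
  thus ?thesis using c(1,2) by blast
qed

primrec Gs :: "(nat \<Rightarrow> nat) \<Rightarrow> (nat \<Rightarrow> nat \<Rightarrow> real) \<Rightarrow> nat \<Rightarrow> nat \<Rightarrow> 'f set \<Rightarrow> 'f set" where
  "Gs ss TT k 0 S = S"
| "Gs ss TT k (Suc j) S = Phi (TT (k + j)) (ss (k + j)) (Gs ss TT k j S)"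

lemma multi_claim:
  assumes sw: "sw_ok \<tau>0 B ss TT"
  shows "\<forall>\<eta>>0. \<exists>\<eta>'>0. \<exists>\<delta>>0. \<forall>k S. W (t k) - W (t (k + j)) < \<delta> \<longrightarrow> (\<forall>i\<in>S. V (e (t k) i) < \<eta>') \<longrightarrow>
      (\<forall>i\<in>Gs ss TT k j S. V (e (t (k + j)) i) < \<eta>)"
proof (induction j)
  case 0
  show ?case
  proof (intro allI impI)
    fix \<eta> :: real assume "\<eta> > 0"
    thus "\<exists>\<eta>'>0. \<exists>\<delta>>0. \<forall>k S. W (t k) - W (t (k + 0)) < \<delta> \<longrightarrow> (\<forall>i\<in>S. V (e (t k) i) < \<eta>') \<longrightarrow>
      (\<forall>i\<in>Gs ss TT k 0 S. V (e (t (k + 0)) i) < \<eta>)"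
      by (intro exI[of _ \<eta>] exI[of _ 1]) auto
  qed
next
  case (Suc j)
  show ?case
  proof (intro allI impI)
    fix \<eta> :: real assume \<eta>: "\<eta> > 0"
    obtain \<eta>1 \<delta>1 where p: "\<eta>1 > 0" "\<delta>1 > 0" "\<And>k S. W (t k) - W (t (Suc k)) < \<delta>1 \<Longrightarrow> (\<forall>i\<in>S. V (e (t k) i) < \<eta>1) \<Longrightarrow>
      (\<forall>i\<in>Phi (TT k) (ss k) S. V (e (t (Suc k)) i) < \<eta>)"
      using period_claim[OF sw \<eta>] by blast
    obtain \<eta>' \<delta>2 where ih: "\<eta>' > 0" "\<delta>2 > 0" "\<And>k S. W (t k) - W (t (k + j)) < \<delta>2 \<Longrightarrow> (\<forall>i\<in>S. V (e (t k) i) < \<eta>') \<Longrightarrow>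
      (\<forall>i\<in>Gs ss TT k j S. V (e (t (k + j)) i) < \<eta>1)"
      using Suc.IH p(1) by blast
    have hm: "\<forall>k S. W (t k) - W (t (k + Suc j)) < min \<delta>1 \<delta>2 \<longrightarrow> (\<forall>i\<in>S. V (e (t k) i) < \<eta>') \<longrightarrow>
      (\<forall>i\<in>Gs ss TT k (Suc j) S. V (e (t (k + Suc j)) i) < \<eta>)"
    proof (intro allI impI)
      fix k S assume dr: "W (t k) - W (t (k + Suc j)) < min \<delta>1 \<delta>2" and sm: "\<forall>i\<in>S. V (e (t k) i) < \<eta>'"
      have W1: "W (t (k + Suc j)) \<le> W (t (k + j))"
        using t_nonneg[OF sw] t_mono[OF sw, of "k + j" "k + Suc j"] by (intro W_mono) auto
      have W2: "W (t (k + j)) \<le> W (t k)"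
        using t_nonneg[OF sw] t_mono[OF sw, of k "k + j"] by (intro W_mono) auto
      have p1: "\<forall>i\<in>Gs ss TT k j S. V (e (t (k + j)) i) < \<eta>1"
        by (rule ih(3)[OF _ sm]) (use dr W1 in linarith)
      have "\<forall>i\<in>Phi (TT (k + j)) (ss (k + j)) (Gs ss TT k j S). V (e (t (Suc (k + j))) i) < \<eta>"
        by (rule p(3)[OF _ p1]) (use dr W2 in simp)
      thus "\<forall>i\<in>Gs ss TT k (Suc j) S. V (e (t (k + Suc j)) i) < \<eta>" by simp
    qed
    have "min \<delta>1 \<delta>2 > 0" using p(2) ih(2) by simp
    thus "\<exists>\<eta>'>0. \<exists>\<delta>>0. \<forall>k S. W (t k) - W (t (k + Suc j)) < \<delta> \<longrightarrow> (\<forall>i\<in>S. V (e (t k) i) < \<eta>') \<longrightarrow>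
      (\<forall>i\<in>Gs ss TT k (Suc j) S. V (e (t (k + Suc j)) i) < \<eta>)"
      using hm ih(1) by blast
  qed
qed

lemma union_adj:
  assumes "union_edge A d \<sigma> a b x y"
  shows "\<exists>r\<in>{a..<b}. adj (\<sigma> r) x y"
  using assms unfolding union_edge_def adj_def
  by (cases x; cases y) auto

lemma Psi_grow:
  assumes sw: "sw_ok \<tau>0 B ss TT" and S: "S \<noteq> UNIV"
  shows "\<exists>i. i \<notin> S \<and> i \<in> Phi (TT k) (ss k) S"
proof -
  obtain i0 where i0: "i0 \<notin> S" using S by blast
  have "(union_edge A d \<sigma> (t k) (t (Suc k)))\<^sup>*\<^sup>* None (Some i0)"
    using joint_conn[of k] unfolding jointly_connected_def by blast
  then obtain x y where xy: "union_edge A d \<sigma> (t k) (t (Suc k)) x y"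
    "x \<in> insert None (Some ` S)" "y \<notin> insert None (Some ` S)"
    using crossing[of _ None "Some i0" "\<lambda>u. u \<in> insert None (Some ` S)"] i0 by blast
  obtain i where y: "y = Some i" and iS: "i \<notin> S" using xy(3) by (cases y) auto
  obtain r where r: "r \<in> {t k..<t (Suc k)}" "adj (\<sigma> r) x y" using union_adj[OF xy(1)] by blast
  have T: "TT k 0 = t k" "TT k (ss k) = t (Suc k)" using sw_TT0[OF sw] sw_TTs[OF sw] by auto
  have incr: "\<And>l. l < ss k \<Longrightarrow> TT k l \<le> TT k (Suc l)"
    using sw_gap[OF sw] sw_tau[OF sw] by (smt (verit))
  obtain l where l: "l < ss k" "r \<in> {TT k l..<TT k (Suc l)}"
    using interval_cover[of "ss k" "TT k" r, OF incr] r(1) T by auto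
  have "\<sigma> r = \<sigma> (TT k l)" using sw_const[OF sw l] .
  hence ad: "adj (\<sigma> (TT k l)) x (Some i)" using r(2) y by simp
  have "i \<in> Rstep (\<sigma> (TT k l)) (Phi (TT k) l S)"
  proof (cases x)
    case None
    thus ?thesis using ad unfolding Rstep_def reach_def by auto
  next
    case (Some j)
    hence "j \<in> S" using xy(2) by auto
    hence "j \<in> Phi (TT k) l S" using Phi_ext by blast
    thus ?thesis using ad Some unfolding Rstep_def reach_def by auto
  qed
  hence "i \<in> Phi (TT k) (Suc l) S" by simp
  hence "i \<in> Phi (TT k) (ss k) S" using Phi_mono_le[of "Suc l" "ss k"] l(1) by auto
  thus ?thesis using iS by blast
qed

lemma Gs_card:
  assumes sw: "sw_ok \<tau>0 B ss TT"
  shows "min j CARD('f) \<le> card (Gs ss TT k j {})"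
proof (induction j)
  case 0 thus ?case by simp
next
  case (Suc j)
  define X where "X = Gs ss TT k j {}"
  define Y where "Y = Phi (TT (k + j)) (ss (k + j)) X"
  have XY: "X \<subseteq> Y" unfolding Y_def by (rule Phi_ext)
  show ?case
  proof (cases "X = UNIV")
    case True
    hence "Y = UNIV" using XY by auto
    thus ?thesis by (simp add: Y_def X_def)
  next
    case False
    then obtain i where "i \<notin> X" "i \<in> Y" using Psi_grow[OF sw] unfolding Y_def by blast
    hence "X \<subset> Y" using XY by blast
    hence "card X < card Y" by (rule psubset_card_mono[rotated]) simp
    thus ?thesis using Suc.IH by (simp add: X_def Y_def)
  qed
qed

lemma Gs_full:
  assumes sw: "sw_ok \<tau>0 B ss TT"
  shows "Gs ss TT k CARD('f) {} = UNIV"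
proof -
  have "CARD('f) \<le> card (Gs ss TT k CARD('f) {})" using Gs_card[OF sw, of "CARD('f)" k] by simp
  thus ?thesis using card_seteq[of UNIV "Gs ss TT k CARD('f) {}"] by auto
qed

end


context sys begin

lemma main: "\<forall>i. ((\<lambda>s. norm (z s i - z\<^sub>\<gamma>)) \<longlongrightarrow> 0) at_top"
proof -
  obtain \<tau>0 B ss TT where sw: "sw_ok \<tau>0 B ss TT" using sw_exists by blast
  have \<tau>0: "\<tau>0 > 0" using sw_tau[OF sw] .
  define L where "L = Inf (W ` {0..})"
  have bdd: "bdd_below (W ` {0..})" using W_nonneg by (auto intro: bdd_belowI[of _ 0])
  have Lle: "L \<le> W s" if "s \<ge> 0" for s
    unfolding L_def using bdd that by (auto intro: cInf_lower)
  have Lapp: "\<exists>s0\<ge>0. W s0 < L + \<epsilon>" if ep: "\<epsilon> > 0" for \<epsilon> :: real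
  proof -
    have "Inf (W ` {0..}) < L + \<epsilon>" using ep L_def by simp
    then obtain x where "x \<in> W ` {0..}" "x < L + \<epsilon>" using cInf_lessD[of "W ` {0..}"] by blast
    thus ?thesis by auto
  qed
  have L0: "L \<le> 0"
  proof (rule ccontr)
    assume "\<not> L \<le> 0"
    hence Lp: "L > 0" by simp
    define N where "N = CARD('f)"
    have Npos: "real N > 0" unfolding N_def using finite_UNIV_card_ge_0[where 'a='f] by simp
    define \<eta> where "\<eta> = L / real N"
    have \<eta>: "\<eta> > 0" using Lp Npos by (simp add: \<eta>_def)
    obtain \<eta>' \<delta> where mc: "\<eta>' > 0" "\<delta> > 0" "\<And>k S. W (t k) - W (t (k + N)) < \<delta> \<Longrightarrow>
        (\<forall>i\<in>S. V (e (t k) i) < \<eta>') \<Longrightarrow> (\<forall>i\<in>Gs ss TT k N S. V (e (t (k + N)) i) < \<eta>)"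
      using multi_claim[OF sw, of N] \<eta> by blast
    obtain s0 where s0: "s0 \<ge> 0" "W s0 < L + \<delta>" using Lapp mc(2) by blast
    define k where "k = nat \<lceil>s0 / \<tau>0\<rceil>"
    have "s0 / \<tau>0 \<le> real k" unfolding k_def by linarith
    hence "s0 \<le> real k * \<tau>0" using \<tau>0 by (simp add: field_simps)
    hence sk: "s0 \<le> t k" using t_lin[OF sw, of k] by linarith
    have W1: "W (t k) \<le> W s0" using s0(1) sk by (rule W_mono)
    have W2: "L \<le> W (t (k + N))" using Lle t_nonneg[OF sw] by blast
    have dr: "W (t k) - W (t (k + N)) < \<delta>" using W1 W2 s0(2) by linarith
    have "\<forall>i\<in>Gs ss TT k N {}. V (e (t (k + N)) i) < \<eta>" by (rule mc(3)[OF dr]) simp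
    hence all: "\<And>i. V (e (t (k + N)) i) < \<eta>" using Gs_full[OF sw, of k] unfolding N_def by auto
    have "W (t (k + N)) < (\<Sum>i\<in>(UNIV::'f set). \<eta>)"
      unfolding W_def U_def by (rule sum_strict_mono) (auto simp: all)
    also have "\<dots> = L" using Npos by (simp add: \<eta>_def N_def)
    finally show False using W2 by simp
  qed
  have Wsmall: "\<exists>s0. \<forall>s\<ge>s0. W s < \<epsilon>" if ep: "\<epsilon> > 0" for \<epsilon> :: real
  proof -
    obtain s0 where s0: "s0 \<ge> 0" "W s0 < L + \<epsilon>" using Lapp[OF ep] by blast
    have "W s < \<epsilon>" if "s \<ge> s0" for s
      using W_mono[OF s0(1) that] s0(2) L0 by linarith
    thus ?thesis by blast
  qed
  show ?thesis
  proof
    fix i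
    show "((\<lambda>s. norm (z s i - z\<^sub>\<gamma>)) \<longlongrightarrow> 0) at_top"
    proof (rule tendstoI)
      fix \<rho> :: real assume \<rho>: "\<rho> > 0"
      obtain \<mu> where \<mu>: "\<mu> > 0" "\<And>x. V x < \<mu> \<Longrightarrow> norm x < \<rho>" using V_small[OF \<rho>] by blast
      obtain s0 where s0: "\<And>s. s \<ge> s0 \<Longrightarrow> W s < \<mu>" using Wsmall[OF \<mu>(1)] by blast
      show "eventually (\<lambda>s. dist (norm (z s i - z\<^sub>\<gamma>)) 0 < \<rho>) at_top"
        unfolding eventually_at_top_linorder
      proof (intro exI[of _ s0] allI impI)
        fix s assume s: "s \<ge> s0"
        have "V (e s i) \<le> W s" unfolding W_def by (rule V_le_U) auto
        hence "V (e s i) < \<mu>" using s0[OF s] by simp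
        hence "norm (e s i) < \<rho>" by (rule \<mu>(2))
        thus "dist (norm (z s i - z\<^sub>\<gamma>)) 0 < \<rho>" by (simp add: e_def)
      qed
    qed
  qed
qed

end

theorem theorem1:
  fixes A :: "'m::finite \<Rightarrow> 'f::finite \<Rightarrow> 'f \<Rightarrow> real"
    and d :: "'m \<Rightarrow> 'f \<Rightarrow> real"
    and \<sigma> :: "real \<Rightarrow> 'm"
    and t :: "nat \<Rightarrow> real"
    and h :: "real^'n \<Rightarrow> real^'n"
    and z\<^sub>\<gamma> :: "real^'n"
    and V :: "real^'n \<Rightarrow> real"
    and gradV :: "real^'n \<Rightarrow> real^'n"
    and q :: "real^'n \<Rightarrow> real^'p"
    and \<Psi> :: "real^'p^'p"
    and z :: "real \<Rightarrow> 'f \<Rightarrow> real^'n"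
  assumes A_sym: "\<And>k i j. A k i j = A k j i"
    and A_nonneg: "\<And>k i j. A k i j \<ge> 0"
    and A_diag: "\<And>k i. A k i i = 0"
    and d_nonneg: "\<And>k i. d k i \<ge> 0"
    and switching: "admissible_switching \<sigma> t"
    and h_poly: "poly_map h"
    and V_poly: "poly_fun V"
    and V_nonneg: "\<And>x. V x \<ge> 0"
    and V_zero: "V 0 = 0"
    and V_pos: "\<And>x. x \<noteq> 0 \<Longrightarrow> V x > 0"
    and V_radial: "\<And>M. \<exists>R. \<forall>x. norm x \<ge> R \<longrightarrow> V x \<ge> M"
    and V_grad: "\<And>x. GDERIV V x :> gradV x"
    and gradV_cont: "continuous_on UNIV gradV"
    and q_poly: "poly_map q"
    and q_zero: "\<And>\<alpha>. q \<alpha> = 0 \<longleftrightarrow> \<alpha> = 0"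
    and Psi_sym: "transpose \<Psi> = \<Psi>"
    and Psi_pd: "\<And>x. x \<noteq> 0 \<Longrightarrow> x \<bullet> (\<Psi> *v x) > 0"
    and assumption1: "\<And>\<alpha> \<beta> \<gamma>.
          (gradV (\<alpha> - \<gamma>) - gradV (\<beta> - \<gamma>)) \<bullet> (h \<alpha> - h \<beta>)
          \<ge> (q (\<alpha> - \<gamma>) - q (\<beta> - \<gamma>)) \<bullet> (\<Psi> *v (q (\<alpha> - \<gamma>) - q (\<beta> - \<gamma>)))"
    and joint_conn: "\<And>k. jointly_connected A d \<sigma> (t k) (t (Suc k))"
    and z_cont: "\<And>i. continuous_on {0..} (\<lambda>s. z s i)"
    and z_ode: "\<And>i s. s \<ge> 0 \<Longrightarrow>
          ((\<lambda>r. z r i) has_vector_derivative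
             ((\<Sum>j\<in>UNIV. A (\<sigma> s) i j *\<^sub>R (h (z s j) - h (z s i)))
              + d (\<sigma> s) i *\<^sub>R (h z\<^sub>\<gamma> - h (z s i)))) (at s within {s..})"
  shows "\<forall>i. ((\<lambda>s. norm (z s i - z\<^sub>\<gamma>)) \<longlongrightarrow> 0) at_top"
proof -
  interpret S: sys A d \<sigma> t h z\<^sub>\<gamma> V gradV q \<Psi> z
    by (rule sys.intro[OF A_sym A_nonneg A_diag d_nonneg switching h_poly V_nonneg V_zero V_pos
        V_radial V_grad q_poly q_zero Psi_pd assumption1 joint_conn z_cont z_ode])
  show ?thesis by (rule S.main)
qed

end
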